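(* Let $M\ge 1$ and let $dq(z)=q(z)\,dz$ be a positive Radon measure on $\mathbb{R}^M$ with density $q\ge 0$ satisfying $$\int_{|z|<1}|z|^{\gamma}\,dq(z)+\int_{|z|\ge 1}|z|^{\gamma-1}\,dq(z)<\infty$$ for $\gamma=2$ or $\gamma=1$. Assume condition (A) holds, with exponent $\alpha\in(0,2)$, set $S_0\subset S=\mathrm{supp}(dq)$ and function $q_0$ as described in the context. Then: (1) $S_0$ is a positive cone: $sS_0\subset S_0$ for all $s>0$; (2) $s^{M+\alpha}q_0(sz)=q_0(z)$ for all $s>0$ and all $z\in S_0$; (3) there is a bounded real-valued function $\overline{q}_0$ on the unit sphere of $\mathbb{R}^M$ such that $q_0(z)=|z|^{-(M+\alpha)}\,\overline{q}_0\!\left(\frac{z}{|z|}\right)$ for all $z\in\mathbb{R}^M\setminus\{0\}$.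
   Context: Condition (A): there exists a constant $\alpha\in(0,2)$ and a constant $C_1>0$ (independent of $\varepsilon$) such that $\varepsilon^{M+\alpha}q(\varepsilon z)\le C_1|z|^{-(M+\alpha)}$ for all $\varepsilon\in(0,1)$ and all $z\in\mathbb{R}^M$; and there exist a subset $S_0\subset S=\mathrm{supp}(dq)$ and a positive function $q_0$ on $S_0$ such that $\lim_{\varepsilon\downarrow 0}\varepsilon^{M+\alpha}q(\varepsilon z)=q_0(z)$ for all $z\in S_0$ and $\lim_{\varepsilon\downarrow 0}\varepsilon^{M+\alpha}q(\varepsilon z)=0$ for all $z\in\mathbb{R}^M\setminus S_0$. The function $q_0$ is extended by $0$ outside $S_0$. *)

theory Defs
  imports "HOL-Analysis.Analysis"
begin

definition measure_support :: "'a::topological_space measure \<Rightarrow> 'a set" where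
  "measure_support N = {x. \<forall>U. open U \<longrightarrow> x \<in> U \<longrightarrow> U \<in> sets N \<longrightarrow> emeasure N U > 0}"

end

theory Submission
  imports Defs
begin

theorem lemma1p1:
  fixes q q0 :: "'a::euclidean_space \<Rightarrow> real"
    and S0 :: "'a set"
    and \<alpha> C1 :: real
    and \<gamma> :: nat
  assumes q_meas: "q \<in> borel_measurable borel"
    and q_nonneg: "\<And>z. q z \<ge> 0"
    and gamma: "\<gamma> = 1 \<or> \<gamma> = 2"
    and int_small: "set_integrable lborel {z. norm z < 1} (\<lambda>z. norm z ^ \<gamma> * q z)"
    and int_large: "set_integrable lborel {z. norm z \<ge> 1} (\<lambda>z. norm z ^ (\<gamma> - 1) * q z)"
    and alpha: "0 < \<alpha>" "\<alpha> < 2"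
    and C1_pos: "C1 > 0"
    and A_bound: "\<And>\<epsilon> z. 0 < \<epsilon> \<Longrightarrow> \<epsilon> < 1 \<Longrightarrow> z \<noteq> 0 \<Longrightarrow>
        \<epsilon> powr (real DIM('a) + \<alpha>) * q (\<epsilon> *\<^sub>R z) \<le> C1 * norm z powr (- (real DIM('a) + \<alpha>))"
    and S0_sub: "S0 \<subseteq> measure_support (density lborel (\<lambda>z. ennreal (q z)))"
    and q0_pos: "\<And>z. z \<in> S0 \<Longrightarrow> q0 z > 0"
    and A_lim_in: "\<And>z. z \<in> S0 \<Longrightarrow>
        ((\<lambda>\<epsilon>. \<epsilon> powr (real DIM('a) + \<alpha>) * q (\<epsilon> *\<^sub>R z)) \<longlongrightarrow> q0 z) (at_right 0)"
    and A_lim_out: "\<And>z. z \<notin> S0 \<Longrightarrow>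
        ((\<lambda>\<epsilon>. \<epsilon> powr (real DIM('a) + \<alpha>) * q (\<epsilon> *\<^sub>R z)) \<longlongrightarrow> 0) (at_right 0)"
    and q0_ext: "\<And>z. z \<notin> S0 \<Longrightarrow> q0 z = 0"
  shows "(\<forall>s>0. (\<lambda>z. s *\<^sub>R z) ` S0 \<subseteq> S0)
    \<and> (\<forall>s>0. \<forall>z\<in>S0. s powr (real DIM('a) + \<alpha>) * q0 (s *\<^sub>R z) = q0 z)
    \<and> (\<exists>qb :: 'a \<Rightarrow> real. bounded (qb ` sphere 0 1) \<and>
         (\<forall>z. z \<noteq> 0 \<longrightarrow> q0 z = norm z powr (- (real DIM('a) + \<alpha>)) * qb (z /\<^sub>R norm z)))"
proof -
  define N where "N = real DIM('a) + \<alpha>"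
  define f where "f = (\<lambda>z \<epsilon>. \<epsilon> powr N * q (\<epsilon> *\<^sub>R z))"
  have lim: "(f z \<longlongrightarrow> q0 z) (at_right 0)" for z
    using A_lim_in[of z] A_lim_out[of z] q0_ext[of z] unfolding f_def N_def by (cases "z \<in> S0") auto
  have scale: "s powr N * q0 (s *\<^sub>R z) = q0 z" if s: "s > 0" for s z
  proof -
    have fl: "filterlim (\<lambda>\<epsilon>. s * \<epsilon>) (at_right 0) (at_right 0)"
    proof (subst filterlim_at, intro conjI)
      show "\<forall>\<^sub>F x in at_right 0. s * x \<in> {0<..} \<and> s * x \<noteq> 0"
        using s by (auto simp: eventually_at_right_less intro!: eventually_mono[OF eventually_at_right_less[of 0]])
      have "((\<lambda>\<epsilon>. s * \<epsilon>) \<longlongrightarrow> s * 0) (at_right (0::real))"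
        by (intro tendsto_intros)
      then show "((\<lambda>\<epsilon>. s * \<epsilon>) \<longlongrightarrow> 0) (at_right (0::real))" by simp
    qed
    have t1: "((\<lambda>\<epsilon>. f z (s * \<epsilon>) / s powr N) \<longlongrightarrow> q0 z / s powr N) (at_right 0)"
      using filterlim_compose[OF lim[of z] fl] s by (intro tendsto_intros) auto
    have eq: "\<forall>\<^sub>F \<epsilon> in at_right 0. f z (s * \<epsilon>) / s powr N = f (s *\<^sub>R z) \<epsilon>"
    proof (rule eventually_mono[OF eventually_at_right_less[of 0]])
      fix \<epsilon> :: real assume "0 < \<epsilon>"
      then show "f z (s * \<epsilon>) / s powr N = f (s *\<^sub>R z) \<epsilon>"
        using s by (simp add: f_def powr_mult mult.commute)
    qed
    have "((\<lambda>\<epsilon>. f (s *\<^sub>R z) \<epsilon>) \<longlongrightarrow> q0 z / s powr N) (at_right 0)"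
      using tendsto_cong[OF eq] t1 by simp
    with lim[of "s *\<^sub>R z"] have "q0 (s *\<^sub>R z) = q0 z / s powr N"
      using tendsto_unique[OF trivial_limit_at_right_real] by blast
    then show ?thesis using s by simp
  qed
  have p1: "\<forall>s>0. (\<lambda>z. s *\<^sub>R z) ` S0 \<subseteq> S0"
  proof (intro allI impI subsetI)
    fix s :: real and y assume s: "s > 0" and "y \<in> (\<lambda>z. s *\<^sub>R z) ` S0"
    then obtain z where z: "z \<in> S0" "y = s *\<^sub>R z" by auto
    have "q0 y > 0" using scale[OF s, of z] q0_pos[OF z(1)] z(2) s
      by (smt (verit, best) powr_gt_zero zero_less_mult_iff)
    then show "y \<in> S0" using q0_ext by force
  qed
  have bnd: "q0 u \<le> C1 \<and> q0 u \<ge> 0" if "norm u = 1" for u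
  proof
    have ev: "\<forall>\<^sub>F \<epsilon> in at_right 0. f u \<epsilon> \<le> C1"
      unfolding eventually_at_right[of 0 1, OF zero_less_one]
      using A_bound[of _ u] that by (fastforce simp: f_def N_def intro!: exI[of _ 1])
    show "q0 u \<le> C1"
      using tendsto_upperbound[OF lim ev trivial_limit_at_right_real] .
    show "q0 u \<ge> 0" using q0_pos[of u] q0_ext[of u] by (cases "u \<in> S0") auto
  qed
  have p3: "\<exists>qb :: 'a \<Rightarrow> real. bounded (qb ` sphere 0 1) \<and>
         (\<forall>z. z \<noteq> 0 \<longrightarrow> q0 z = norm z powr (- (real DIM('a) + \<alpha>)) * qb (z /\<^sub>R norm z))"
  proof (intro exI conjI allI impI)
    show "bounded (q0 ` sphere 0 1)"
      unfolding bounded_iff using bnd C1_pos by (intro exI[of _ C1]) (force simp: abs_le_iff)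
    fix z :: 'a assume z: "z \<noteq> 0"
    have "norm z powr N * q0 (norm z *\<^sub>R (z /\<^sub>R norm z)) = q0 (z /\<^sub>R norm z)"
      using scale[of "norm z" "z /\<^sub>R norm z"] z by simp
    then have "norm z powr N * q0 z = q0 (z /\<^sub>R norm z)" using z by simp
    then show "q0 z = norm z powr (- (real DIM('a) + \<alpha>)) * q0 (z /\<^sub>R norm z)"
    proof -
      have pos: "norm z powr N > 0" using z by simp
      have "norm z powr (- (real DIM('a) + \<alpha>)) = 1 / norm z powr N"
        unfolding N_def using powr_minus[of "norm z" "real DIM('a) + \<alpha>"] by (simp add: divide_inverse)
      then show ?thesis using pos \<open>norm z powr N * q0 z = q0 (z /\<^sub>R norm z)\<close>
        by (metis (no_types, lifting) mult.commute mult.left_commute mult.right_neutral nonzero_eq_divide_eq order_less_irrefl)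
    qed
  qed
  show ?thesis using p1 p3 scale unfolding N_def by blast
qed

end
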